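(* Let $(C,d)$ be a finitely generated chain complex with two filtrations given by filtration degree functions $p$ and $p'$ such that for every $x\in C$ the difference $p'(x)-p(x)$ is either $0$ or $1$. If the $p'$-spectral sequence collapses on page $l$, then the $p$-spectral sequence collapses on page $l+1$; i.e. the $p$-spectral sequence collapses at most one page after the $p'$-spectral sequence does.
   Context: A filtration on $C$ is a function $p:C\to\mathbb{Z}\cup\{-\infty\}$ with $p(x-y)\le\max(p(x),p(y))$ and $p(dx)\le p(x)$; write $C^k=\{x:p(x)\le k\}$. Define $Z^k_r=\{x\in C^k: dx\in C^{k-r}\}$, $B^k_r=\{dy\in C^k: y\in C^{k+r}\}$, and the pages $E^k_r=Z^k_r/(Z^{k-1}_{r-1}+B^k_{r-1})$ with differential $d_r[x]=[dx]:E^k_r\to E^{k-r}_r$. The spectral sequence collapses on page $l$ if $d_r=0$ for all $r\ge l$. *)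

theory Defs
  imports "HOL-Library.Extended_Real"
begin

definition is_filtration :: "('c::ab_group_add \<Rightarrow> 'c) \<Rightarrow> ('c \<Rightarrow> ereal) \<Rightarrow> bool" where
  "is_filtration d p \<longleftrightarrow>
     (\<forall>x. p x = -\<infinity> \<or> (\<exists>n::int. p x = ereal (of_int n))) \<and>
     (\<forall>x y. p (x - y) \<le> max (p x) (p y)) \<and>
     (\<forall>x. p (d x) \<le> p x)"

definition filt :: "('c \<Rightarrow> ereal) \<Rightarrow> int \<Rightarrow> 'c set" where
  "filt p k = {x. p x \<le> ereal (of_int k)}"

definition Zset :: "('c \<Rightarrow> ereal) \<Rightarrow> ('c \<Rightarrow> 'c) \<Rightarrow> int \<Rightarrow> int \<Rightarrow> 'c set" where
  "Zset p d k r = {x \<in> filt p k. d x \<in> filt p (k - r)}"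

definition Bset :: "('c \<Rightarrow> ereal) \<Rightarrow> ('c \<Rightarrow> 'c) \<Rightarrow> int \<Rightarrow> int \<Rightarrow> 'c set" where
  "Bset p d k r = {d y | y. y \<in> filt p (k + r) \<and> d y \<in> filt p k}"

text \<open>The subgroup Z^(k-1)_(r-1) + B^k_(r-1) by which Z^k_r is divided to form E^k_r.\<close>
definition Eden :: "('c::ab_group_add \<Rightarrow> ereal) \<Rightarrow> ('c \<Rightarrow> 'c) \<Rightarrow> int \<Rightarrow> int \<Rightarrow> 'c set" where
  "Eden p d k r = {a + b | a b. a \<in> Zset p d (k - 1) (r - 1) \<and> b \<in> Bset p d k (r - 1)}"

text \<open>d_r : E^k_r -> E^(k-r)_r, [x] |-> [dx], is the zero map: for every x in Z^k_r,
  the class of dx in E^(k-r)_r = Z^(k-r)_r / Eden (k-r) r vanishes.\<close>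
definition dr_zero :: "('c::ab_group_add \<Rightarrow> ereal) \<Rightarrow> ('c \<Rightarrow> 'c) \<Rightarrow> int \<Rightarrow> int \<Rightarrow> bool" where
  "dr_zero p d r k \<longleftrightarrow> (\<forall>x \<in> Zset p d k r. d x \<in> Eden p d (k - r) r)"

definition collapses_on :: "('c::ab_group_add \<Rightarrow> ereal) \<Rightarrow> ('c \<Rightarrow> 'c) \<Rightarrow> nat \<Rightarrow> bool" where
  "collapses_on p d l \<longleftrightarrow> (\<forall>r::nat. r \<ge> l \<longrightarrow> (\<forall>k. dr_zero p d (int r) k))"

end

theory Submission
  imports Defs
begin

definition RR :: "(int \<Rightarrow> 'c \<Rightarrow> bool) \<Rightarrow> ('c \<Rightarrow> 'c) \<Rightarrow> int \<Rightarrow> int \<Rightarrow> 'c \<Rightarrow> bool" where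
  "RR lev d s t z \<longleftrightarrow> (\<exists>y. lev s y \<and> d y = z) \<and> lev t z"

lemma chase:
  fixes lev :: "int \<Rightarrow> 'c::ab_group_add \<Rightarrow> bool" and d :: "'c \<Rightarrow> 'c"
  assumes mono: "\<And>t z. lev t z \<Longrightarrow> lev (t+1) z"
    and sub: "\<And>t a b. lev t a \<Longrightarrow> lev t b \<Longrightarrow> lev t (a - b)"
    and zer: "\<And>t. lev t 0"
    and lin: "\<And>a b. d (a - b) = d a - d b"
    and H: "\<And>a b z. a - b \<ge> l \<Longrightarrow> RR lev d (2*a-1) (2*b-1) z \<Longrightarrow>
       \<exists>z1 z2. z = z1 + z2 \<and> RR lev d (2*a-3) (2*b-1) z1 \<and> RR lev d (2*a-1) (2*b-3) z2"
    and kj: "k - j \<ge> l + 1"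
    and z: "RR lev d (2*k) (2*j) z"
  shows "\<exists>z1 z2. z = z1 + z2 \<and> RR lev d (2*k-2) (2*j) z1 \<and> RR lev d (2*k) (2*j-2) z2"
proof -
  have monoN: "lev (t + int n) z" if "lev t z" for t z n
  proof (induction n)
    case 0 then show ?case using that by simp
  next
    case (Suc n) then show ?case using mono[of "t + int n" z] by (simp add: algebra_simps)
  qed
  have monoL: "lev t' z" if "lev t z" "t \<le> t'" for t t' z
    using monoN[OF that(1), of "nat (t' - t)"] that(2) by simp
  have addL: "lev t (a + b)" if "lev t a" "lev t b" for t a b
  proof -
    have "lev t (0 - b)" using sub zer that(2) by blast
    then have "lev t (a - (0 - b))" using sub that(1) by blast
    then show ?thesis by simp
  qed
  have d0: "d 0 = 0" using lin[of 0 0] by simp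
  have dadd: "d (a + b) = d a + d b" for a b
    using lin[of a "0 - b"] lin[of 0 b] d0 by simp
  have Rmono: "RR lev d s' t' w" if "RR lev d s t w" "s \<le> s'" "t \<le> t'" for s t s' t' w
    using that monoL unfolding RR_def by blast
  have Radd: "RR lev d s t (a + b)" if "RR lev d s t a" "RR lev d s t b" for s t a b
    using that addL dadd unfolding RR_def by metis
  have Rsub: "RR lev d s t (a - b)" if "RR lev d s t a" "RR lev d s t b" for s t a b
    using that sub lin unfolding RR_def by metis
  let ?L = "\<lambda>w. \<exists>z1 z2. w = z1 + z2 \<and> RR lev d (2*k-2) (2*j) z1 \<and> RR lev d (2*k) (2*j-2) z2"
  have Ladd: "?L (a + b)" if "?L a" "?L b" for a b
  proof -
    from that obtain a1 a2 b1 b2 where "a = a1 + a2" "b = b1 + b2"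
      "RR lev d (2*k-2) (2*j) a1" "RR lev d (2*k) (2*j-2) a2"
      "RR lev d (2*k-2) (2*j) b1" "RR lev d (2*k) (2*j-2) b2" by blast
    then show ?thesis
      by (intro exI[of _ "a1 + b1"] exI[of _ "a2 + b2"]) (auto simp: Radd algebra_simps)
  qed
  have A: "?L w" if wR: "RR lev d (2*k-1) (2*j-1) w" for w
  proof -
    obtain w1 w2 where "w = w1 + w2" "RR lev d (2*k-3) (2*j-1) w1" "RR lev d (2*k-1) (2*j-3) w2"
      using H[of k j w] kj wR by auto
    moreover have "RR lev d (2*k-2) (2*j) w1" using Rmono[OF \<open>RR lev d (2*k-3) (2*j-1) w1\<close>] by simp
    moreover have "RR lev d (2*k) (2*j-2) w2" using Rmono[OF \<open>RR lev d (2*k-1) (2*j-3) w2\<close>] by simp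
    ultimately show ?thesis by blast
  qed
  have "RR lev d (2*(k+1)-1) (2*(j+1)-1) z" using Rmono[OF z] by simp
  then obtain u v where uv: "z = u + v" "RR lev d (2*(k+1)-3) (2*(j+1)-1) u" "RR lev d (2*(k+1)-1) (2*(j+1)-3) v"
    using H[of "k+1" "j+1" z] kj by auto
  have u1: "RR lev d (2*k-1) (2*j+1) u" using uv(2) by (simp add: algebra_simps)
  have v1: "RR lev d (2*k+1) (2*j-1) v" using uv(3) by (simp add: algebra_simps)
  have ul: "lev (2*j) u"
  proof -
    have "lev (2*j-1) v" using v1 unfolding RR_def by blast
    then have "lev (2*j) v" using monoL[of "2*j-1" v "2*j"] by simp
    moreover have "lev (2*j) z" using z unfolding RR_def by blast
    ultimately have "lev (2*j) (z - v)" using sub by blast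
    then show ?thesis using uv(1) by simp
  qed
  have vq: "\<exists>y. lev (2*k) y \<and> d y = v"
  proof -
    obtain yz where yz: "lev (2*k) yz" "d yz = z" using z unfolding RR_def by blast
    obtain yu where yu: "lev (2*k-1) yu" "d yu = u" using u1 unfolding RR_def by blast
    have "lev (2*k) yu" using monoL[OF yu(1), of "2*k"] by simp
    then have "lev (2*k) (yz - yu)" using sub yz(1) by blast
    moreover have "d (yz - yu) = v" using lin yz yu uv(1) by simp
    ultimately show ?thesis by blast
  qed
  obtain u1' u2 where uu: "u = u1' + u2" "RR lev d (2*k-3) (2*j+1) u1'" "RR lev d (2*k-1) (2*j-1) u2"
    using H[of k "j+1" u] kj u1 by (auto simp: algebra_simps)
  have Lu1: "?L u1'"
  proof -
    have "lev (2*j-1) u2" using uu(3) unfolding RR_def by blast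
    then have "lev (2*j) u2" using monoL[of "2*j-1" u2 "2*j"] by simp
    then have "lev (2*j) (u - u2)" using sub ul by blast
    then have "lev (2*j) u1'" using uu(1) by simp
    then have "RR lev d (2*k-3) (2*j) u1'" using uu(2) unfolding RR_def by blast
    then have "RR lev d (2*k-2) (2*j) u1'" using Rmono[of "2*k-3" "2*j" u1' "2*k-2" "2*j"] by simp
    moreover have "RR lev d (2*k) (2*j-2) 0" unfolding RR_def using zer d0 by blast
    ultimately show ?thesis by (intro exI[of _ u1'] exI[of _ 0]) simp
  qed
  have Lu: "?L u" using Ladd[OF Lu1 A[OF uu(3)]] uu(1) by simp
  obtain v1' v2 where vv: "v = v1' + v2" "RR lev d (2*k-1) (2*j-1) v1'" "RR lev d (2*k+1) (2*j-3) v2"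
    using H[of "k+1" j v] kj v1 by (auto simp: algebra_simps)
  have Lv2: "?L v2"
  proof -
    obtain yv where yv: "lev (2*k) yv" "d yv = v" using vq by blast
    obtain y1 where y1: "lev (2*k-1) y1" "d y1 = v1'" using vv(2) unfolding RR_def by blast
    have "lev (2*k) y1" using monoL[OF y1(1), of "2*k"] by simp
    then have "lev (2*k) (yv - y1)" using sub yv(1) by blast
    moreover have "d (yv - y1) = v2" using lin yv y1 vv(1) by simp
    ultimately have "RR lev d (2*k) (2*j-3) v2" using vv(3) unfolding RR_def by blast
    then have "RR lev d (2*k) (2*j-2) v2" using Rmono[of "2*k" "2*j-3" v2 "2*k" "2*j-2"] by simp
    moreover have "RR lev d (2*k-2) (2*j) 0" unfolding RR_def using zer d0 by blast
    ultimately show ?thesis by (intro exI[of _ 0] exI[of _ v2]) simp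
  qed
  have Lv: "?L v" using Ladd[OF A[OF vv(2)] Lv2] vv(1) by simp
  show ?thesis using Ladd[OF Lu Lv] uv(1) by simp
qed


definition levf :: "('c \<Rightarrow> ereal) \<Rightarrow> ('c \<Rightarrow> ereal) \<Rightarrow> int \<Rightarrow> 'c \<Rightarrow> bool" where
  "levf p p' t z = (if even t then p z \<le> ereal (of_int (t div 2)) else p' z \<le> ereal (of_int ((t+1) div 2)))"

lemma levE: "levf p p' (2*a) z \<longleftrightarrow> p z \<le> ereal (of_int a)"
  unfolding levf_def by simp

lemma levO: "levf p p' (2*a-1) z \<longleftrightarrow> p' z \<le> ereal (of_int a)"
proof -
  have "\<not> even (2*a-1)" by simp
  moreover have "(2*a-1+1) div 2 = a" by simp
  ultimately show ?thesis unfolding levf_def by simp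
qed

lemma levO3: "levf p p' (2*a-3) z \<longleftrightarrow> p' z \<le> ereal (of_int (a-1))"
  using levO[of p p' "a-1" z] by (simp add: algebra_simps)

lemma levE2: "levf p p' (2*a-2) z \<longleftrightarrow> p z \<le> ereal (of_int (a-1))"
  using levE[of p p' "a-1" z] by (simp add: algebra_simps)

lemma filt_sub:
  assumes "is_filtration d p" "p a \<le> c" "p b \<le> c"
  shows "p (a - b) \<le> c"
proof -
  have "p (a - b) \<le> max (p a) (p b)" using assms(1) unfolding is_filtration_def by blast
  then show ?thesis using assms(2,3) by (simp add: max_def split: if_splits)
qed

lemma filt_zero:
  assumes "is_filtration d p" "collapses_on p d l" "module_hom scale scale d"
  shows "p 0 = -\<infinity>"
proof (rule ccontr)
  assume "p 0 \<noteq> -\<infinity>"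
  then obtain m :: int where m: "p 0 = ereal (of_int m)" using assms(1) unfolding is_filtration_def by blast
  have d0: "d 0 = 0" using module_hom.zero[OF assms(3)] .
  let ?r = "Suc l"
  have "l \<le> ?r" by simp
  then have "dr_zero p d (int ?r) (m + int ?r)" using assms(2) unfolding collapses_on_def by blast
  moreover have "0 \<in> Zset p d (m + int ?r) (int ?r)"
    unfolding Zset_def filt_def using m d0 by simp
  ultimately have "d 0 \<in> Eden p d (m + int ?r - int ?r) (int ?r)" unfolding dr_zero_def by blast
  then obtain a b where ab: "0 = a + b" "a \<in> Zset p d (m - 1) (int ?r - 1)" using d0
    unfolding Eden_def by auto
  have "p a \<le> ereal (of_int (m - 1))" using ab(2) unfolding Zset_def filt_def by simp
  moreover have "p 0 \<le> p a"
  proof -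
    have "p (a - a) \<le> max (p a) (p a)" using assms(1) unfolding is_filtration_def by blast
    then show ?thesis by simp
  qed
  ultimately have "ereal (of_int m) \<le> ereal (of_int (m - 1))" using m by (metis order_trans)
  then show False by simp
qed

theorem proposition4p1:
  fixes scale :: "'r::comm_ring_1 \<Rightarrow> 'c::ab_group_add \<Rightarrow> 'c"
    and d :: "'c \<Rightarrow> 'c"
    and p p' :: "'c \<Rightarrow> ereal"
    and l :: nat
  assumes "module scale"
    and "module_hom scale scale d"
    and "\<forall>x. d (d x) = 0"
    and "\<exists>S. finite S \<and> module.span scale S = UNIV"
    and "is_filtration d p"
    and "is_filtration d p'"
    and "\<forall>x. p' x = p x \<or> p' x = p x + 1"
    and "collapses_on p' d l"
  shows "collapses_on p d (Suc l)"
proof -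
  note fp = assms(5) and fp' = assms(6) and pp = assms(7) and col = assms(8)
  have lin: "d (a - b) = d a - d b" for a b using module_hom.diff[OF assms(2)] .
  have d0: "d 0 = 0" using module_hom.zero[OF assms(2)] .
  have p'0: "p' 0 = -\<infinity>" using filt_zero[OF fp' col assms(2)] .
  have p0: "p 0 = -\<infinity>" using pp[rule_format, of 0] p'0
    by (cases "p 0") auto
  have le1: "p x \<le> p' x" for x using pp[rule_format, of x]
    by (cases "p x") auto
  have le2: "p' x \<le> p x + 1" for x using pp[rule_format, of x]
    by (cases "p x") auto
  let ?lev = "levf p p'"
  have mono: "?lev (t+1) z" if "?lev t z" for t z
  proof (cases "even t")
    case True
    then obtain a where t: "t = 2*a" by (rule evenE)
    have "p z \<le> ereal (of_int a)" using that unfolding t levE .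
    then have "p z + 1 \<le> ereal (of_int a) + 1" by (rule add_right_mono)
    then have "p' z \<le> ereal (of_int a) + 1" using le2[of z] by (rule order_trans[rotated])
    then have "p' z \<le> ereal (of_int (a+1))" by simp
    then show ?thesis using levO[of p p' "a+1" z] t by (simp add: algebra_simps)
  next
    case False
    define a where "a = (t + 1) div 2"
    have t: "t = 2*a - 1" using False unfolding a_def by presburger
    have "p' z \<le> ereal (of_int a)" using that unfolding t levO .
    then have "p z \<le> ereal (of_int a)" using le1[of z] by (rule order_trans[rotated])
    then show ?thesis using levE[of p p' a z] t by simp
  qed
  have sub: "?lev t (a - b)" if "?lev t a" "?lev t b" for t a b
    using that filt_sub[OF fp] filt_sub[OF fp'] unfolding levf_def by (auto split: if_splits)
  have zer: "?lev t 0" for t unfolding levf_def using p0 p'0 by simp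
  have H: "\<exists>z1 z2. z = z1 + z2 \<and> RR ?lev d (2*a-3) (2*b-1) z1 \<and> RR ?lev d (2*a-1) (2*b-3) z2"
    if ab: "a - b \<ge> int l" and zR: "RR ?lev d (2*a-1) (2*b-1) z" for a b z
  proof -
    obtain y where y: "p' y \<le> ereal (of_int a)" "d y = z" "p' z \<le> ereal (of_int b)"
      using zR unfolding RR_def levO by blast
    define r where "r = nat (a - b)"
    have r: "int r = a - b" "r \<ge> l" using ab unfolding r_def by auto
    have "dr_zero p' d (int r) a" using col r(2) unfolding collapses_on_def by blast
    moreover have "y \<in> Zset p' d a (int r)" unfolding Zset_def filt_def using y r by simp
    ultimately have "d y \<in> Eden p' d (a - int r) (int r)" unfolding dr_zero_def by blast
    then obtain a0 b0 where e: "d y = a0 + b0" "a0 \<in> Zset p' d (b - 1) (int r - 1)"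
       "b0 \<in> Bset p' d b (int r - 1)" using r unfolding Eden_def by auto
    obtain y0 where y0: "b0 = d y0" "p' y0 \<le> ereal (of_int (a - 1))" "p' b0 \<le> ereal (of_int b)"
      using e(3) r unfolding Bset_def filt_def by (auto simp: algebra_simps)
    have a0: "p' a0 \<le> ereal (of_int (b - 1))" using e(2) unfolding Zset_def filt_def by simp
    have "RR ?lev d (2*a-3) (2*b-1) b0" unfolding RR_def levO3 levO using y0 by blast
    moreover have "RR ?lev d (2*a-1) (2*b-3) a0"
    proof -
      have "p' y0 \<le> ereal (of_int a)" using y0(2) order_trans[of "p' y0" "ereal (of_int (a-1))" "ereal (of_int a)"] by simp
      then have "p' (y - y0) \<le> ereal (of_int a)" using filt_sub[OF fp' y(1)] by blast
      moreover have "d (y - y0) = a0" using lin e(1) y0(1) by simp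
      ultimately show ?thesis unfolding RR_def levO3 levO using a0 by blast
    qed
    ultimately show ?thesis using e(1) y(2) by (metis add.commute)
  qed
  show ?thesis unfolding collapses_on_def dr_zero_def
  proof (intro allI impI ballI)
    fix r :: nat and k :: int and x
    assume r: "Suc l \<le> r" and x: "x \<in> Zset p d k (int r)"
    define j where "j = k - int r"
    have px: "p x \<le> ereal (of_int k)" "p (d x) \<le> ereal (of_int j)"
      using x unfolding Zset_def filt_def j_def by auto
    have "RR ?lev d (2*k) (2*j) (d x)" unfolding RR_def levE using px by blast
    moreover have "k - j \<ge> int l + 1" using r j_def by simp
    ultimately obtain z1 z2 where zz: "d x = z1 + z2" "RR ?lev d (2*k-2) (2*j) z1" "RR ?lev d (2*k) (2*j-2) z2"
      using chase[of ?lev d "int l" k j "d x", OF mono sub zer lin H] by blast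
    obtain y1 where y1: "p y1 \<le> ereal (of_int (k-1))" "d y1 = z1" "p z1 \<le> ereal (of_int j)"
      using zz(2) unfolding RR_def levE levE2 by blast
    obtain y2 where y2: "d y2 = z2" "p z2 \<le> ereal (of_int (j-1))"
      using zz(3) unfolding RR_def levE levE2 by blast
    have jj: "k - int r = j" "k - int r - 1 = j - 1" "k - int r + (int r - 1) = k - 1"
       "k - int r - 1 - (int r - 1) = j - int r" "j + (int r - 1) = k - 1" using j_def by simp_all
    have "d z2 = 0" using y2(1) assms(3) by metis
    then have "p (d z2) = -\<infinity>" using p0 by simp
    then have Z2: "z2 \<in> Zset p d (k - int r - 1) (int r - 1)"
      unfolding Zset_def filt_def jj using y2(2) by simp
    have Z1: "z1 \<in> Bset p d (k - int r) (int r - 1)"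
      unfolding Bset_def filt_def jj using y1 by blast
    have "d x = z2 + z1" using zz(1) by (simp add: add.commute)
    then show "d x \<in> Eden p d (k - int r) (int r)"
      unfolding Eden_def using Z1 Z2 by blast
  qed
qed

end
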